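(* Let $R$ be a commutative Noetherian ring, $I\subseteq R$ an ideal, and $(F_\bullet,d_\bullet)$ a free resolution of $R/I$ with $F_0=R$. Assume that for each $i\ge0$ there is an $R$-bilinear product $\cdot:F_1\otimes_R F_i\to F_{i+1}$ satisfying, for all $f_1\in F_1$, $f_i\in F_i$: (a) $d_{i+1}(f_1\cdot f_i)=d_1(f_1)f_i-f_1\cdot d_i(f_i)$, and (b) $f_1\cdot(f_1\cdot f_i)=0$. Then for any ideal $\mathfrak{a}\subseteq I$ generated by a regular sequence, $F_\bullet$ is a DG-module over the Koszul complex $K_\bullet$ resolving $R/\mathfrak{a}$.
   Context: A DG $K_\bullet$-module structure on $F_\bullet$ is a unital, associative action $K_p\otimes_R F_q\to F_{p+q}$ of the Koszul complex (viewed as the exterior algebra DG-algebra) satisfying $d(x\cdot f)=d(x)\cdot f+(-1)^{|x|}x\cdot d(f)$. *)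

theory Defs
  imports Main
begin

definition is_ideal :: "'a::comm_ring_1 set \<Rightarrow> bool" where
  "is_ideal J \<longleftrightarrow> 0 \<in> J \<and> (\<forall>x\<in>J. \<forall>y\<in>J. x + y \<in> J) \<and> (\<forall>r. \<forall>x\<in>J. r * x \<in> J)"

definition ideal_gen :: "(nat \<Rightarrow> 'a::comm_ring_1) \<Rightarrow> nat \<Rightarrow> 'a set" where
  "ideal_gen a k = {\<Sum>j<k. r j * a j | r. True}"

definition noetherian_ring :: "'a::comm_ring_1 itself \<Rightarrow> bool" where
  "noetherian_ring TYPE('a) \<longleftrightarrow>
     (\<forall>J::'a set. is_ideal J \<longrightarrow> (\<exists>a k. J = ideal_gen a k))"

definition regular_sequence :: "(nat \<Rightarrow> 'a::comm_ring_1) \<Rightarrow> nat \<Rightarrow> bool" where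
  "regular_sequence a n \<longleftrightarrow>
     (\<forall>k<n. \<forall>r. r * a k \<in> ideal_gen a k \<longrightarrow> r \<in> ideal_gen a k) \<and>
     ideal_gen a n \<noteq> UNIV"

definition free_mod :: "'i set \<Rightarrow> ('i \<Rightarrow> 'a::comm_ring_1) set" where
  "free_mod B = {f. (\<forall>x. x \<notin> B \<longrightarrow> f x = 0) \<and> finite {x. f x \<noteq> 0}}"

definition vadd :: "('i \<Rightarrow> 'a::comm_ring_1) \<Rightarrow> ('i \<Rightarrow> 'a) \<Rightarrow> 'i \<Rightarrow> 'a" where
  "vadd f g = (\<lambda>x. f x + g x)"

definition vscale :: "'a::comm_ring_1 \<Rightarrow> ('i \<Rightarrow> 'a) \<Rightarrow> 'i \<Rightarrow> 'a" where
  "vscale r f = (\<lambda>x. r * f x)"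

definition vzero :: "'i \<Rightarrow> 'a::comm_ring_1" where
  "vzero = (\<lambda>x. 0)"

definition lin_on :: "('i \<Rightarrow> 'a::comm_ring_1) set \<Rightarrow> (('i \<Rightarrow> 'a) \<Rightarrow> ('j \<Rightarrow> 'a)) \<Rightarrow> bool" where
  "lin_on A h \<longleftrightarrow> (\<forall>u\<in>A. \<forall>v\<in>A. h (vadd u v) = vadd (h u) (h v)) \<and>
                   (\<forall>r. \<forall>u\<in>A. h (vscale r u) = vscale r (h u))"

definition bilin_on :: "('i \<Rightarrow> 'a::comm_ring_1) set \<Rightarrow> ('j \<Rightarrow> 'a) set \<Rightarrow>
     (('i \<Rightarrow> 'a) \<Rightarrow> ('j \<Rightarrow> 'a) \<Rightarrow> ('k \<Rightarrow> 'a)) \<Rightarrow> bool" where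
  "bilin_on A C h \<longleftrightarrow> (\<forall>u\<in>A. lin_on C (h u)) \<and> (\<forall>v\<in>C. lin_on A (\<lambda>u. h u v))"

text \<open>F_i = free module on basis B i; F_0 = R is free on the single basis element i0.
  d i : F_i \<rightarrow> F_(i-1) for i \<ge> 1, d 0 = 0 (F_(-1) = 0).  The complex is exact in
  degrees \<ge> 1 and H_0 = F_0 / im d_1 = R/I, i.e. im d_1 = I e_(i0).\<close>
definition free_resolution ::
  "'a::comm_ring_1 set \<Rightarrow> (nat \<Rightarrow> 'i set) \<Rightarrow> 'i \<Rightarrow> (nat \<Rightarrow> ('i \<Rightarrow> 'a) \<Rightarrow> ('i \<Rightarrow> 'a)) \<Rightarrow> bool" where
  "free_resolution I B i0 d \<longleftrightarrow>
     B 0 = {i0} \<and>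
     (\<forall>i. lin_on (free_mod (B i)) (d i)) \<and>
     (\<forall>f\<in>free_mod (B 0). d 0 f = vzero) \<and>
     (\<forall>i. \<forall>f\<in>free_mod (B (Suc i)). d (Suc i) f \<in> free_mod (B i)) \<and>
     (\<forall>i. \<forall>f\<in>free_mod (B (Suc i)). d i (d (Suc i) f) = vzero) \<and>
     (\<forall>i\<ge>1. {f \<in> free_mod (B i). d i f = vzero} = d (Suc i) ` free_mod (B (Suc i))) \<and>
     d 1 ` free_mod (B 1) = {f \<in> free_mod (B 0). f i0 \<in> I}"

text \<open>Elements: coefficient functions on subsets S of {..<n}, standing for e_S.\<close>
definition koszul :: "nat \<Rightarrow> nat \<Rightarrow> (nat set \<Rightarrow> 'a::comm_ring_1) set" where
  "koszul n p = {x. \<forall>S. \<not> (S \<subseteq> {..<n} \<and> card S = p) \<longrightarrow> x S = 0}"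

text \<open>Sign of e_S \<and> e_T = sgn(S,T) e_(S \<union> T) for disjoint S, T.\<close>
definition ksign :: "nat set \<Rightarrow> nat set \<Rightarrow> 'a::comm_ring_1" where
  "ksign S T = (-1) ^ card {(s, t). s \<in> S \<and> t \<in> T \<and> t < s}"

definition kmult :: "(nat set \<Rightarrow> 'a::comm_ring_1) \<Rightarrow> (nat set \<Rightarrow> 'a) \<Rightarrow> nat set \<Rightarrow> 'a" where
  "kmult x y = (\<lambda>U. \<Sum>S\<in>Pow U. ksign S (U - S) * x S * y (U - S))"

definition kunit :: "nat set \<Rightarrow> 'a::comm_ring_1" where
  "kunit = (\<lambda>S. if S = {} then 1 else 0)"

text \<open>d(e_S) = \<Sum>_(j\<in>S) (-1)^#{s\<in>S. s<j} a_j e_(S-{j}).\<close>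
definition kdiff :: "(nat \<Rightarrow> 'a::comm_ring_1) \<Rightarrow> nat \<Rightarrow> (nat set \<Rightarrow> 'a) \<Rightarrow> nat set \<Rightarrow> 'a" where
  "kdiff a n x = (\<lambda>T. \<Sum>j\<in>{..<n} - T. (-1) ^ card {s\<in>T. s < j} * a j * x (insert j T))"

text \<open>act p q : K_p \<times> F_q \<rightarrow> F_(p+q), bilinear, unital, associative, Leibniz rule.
  (For p = 0 the Koszul differential vanishes, and for q = 0 one has d 0 = 0, so the
  nat-subtraction indices p-1, q-1 only ever meet zero arguments.)\<close>
definition dg_koszul_module ::
  "(nat \<Rightarrow> 'a::comm_ring_1) \<Rightarrow> nat \<Rightarrow> (nat \<Rightarrow> 'i set) \<Rightarrow> (nat \<Rightarrow> ('i \<Rightarrow> 'a) \<Rightarrow> ('i \<Rightarrow> 'a))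
    \<Rightarrow> (nat \<Rightarrow> nat \<Rightarrow> (nat set \<Rightarrow> 'a) \<Rightarrow> ('i \<Rightarrow> 'a) \<Rightarrow> ('i \<Rightarrow> 'a)) \<Rightarrow> bool" where
  "dg_koszul_module a n B d act \<longleftrightarrow>
     (\<forall>p q. bilin_on (koszul n p) (free_mod (B q)) (act p q)) \<and>
     (\<forall>p q. \<forall>x\<in>koszul n p. \<forall>f\<in>free_mod (B q). act p q x f \<in> free_mod (B (p + q))) \<and>
     (\<forall>q. \<forall>f\<in>free_mod (B q). act 0 q kunit f = f) \<and>
     (\<forall>p p' q. \<forall>x\<in>koszul n p. \<forall>y\<in>koszul n p'. \<forall>f\<in>free_mod (B q).
        act (p + p') q (kmult x y) f = act p (p' + q) x (act p' q y f)) \<and>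
     (\<forall>p q. \<forall>x\<in>koszul n p. \<forall>f\<in>free_mod (B q).
        d (p + q) (act p q x f) =
          vadd (act (p - 1) q (kdiff a n x) f) (vscale ((-1) ^ p) (act p (q - 1) x (d q f))))"

end

theory Submission
  imports Defs
begin


lemma fm_zero: "vzero \<in> free_mod A"
  by (simp add: free_mod_def vzero_def)

lemma fm_add: "u \<in> free_mod A \<Longrightarrow> v \<in> free_mod A \<Longrightarrow> vadd u v \<in> free_mod A"
proof -
  assume u: "u \<in> free_mod A" and v: "v \<in> free_mod A"
  have s: "{x. u x + v x \<noteq> 0} \<subseteq> {x. u x \<noteq> 0} \<union> {x. v x \<noteq> 0}" by auto
  have "finite ({x. u x \<noteq> 0} \<union> {x. v x \<noteq> 0})" using u v by (simp add: free_mod_def)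
  then have "finite {x. u x + v x \<noteq> 0}" using finite_subset[OF s] by blast
  then show ?thesis using u v by (simp add: free_mod_def vadd_def)
qed

lemma fm_scale: "u \<in> free_mod A \<Longrightarrow> vscale r u \<in> free_mod A"
proof -
  assume u: "u \<in> free_mod A"
  have "{x. r * u x \<noteq> 0} \<subseteq> {x. u x \<noteq> 0}" by auto
  moreover have "finite {x. u x \<noteq> 0}" using u by (simp add: free_mod_def)
  ultimately have "finite {x. r * u x \<noteq> 0}" using finite_subset by blast
  then show ?thesis using u by (simp add: free_mod_def vscale_def)
qed

lemma fm_sum: assumes "finite K" "\<And>k. k \<in> K \<Longrightarrow> g k \<in> free_mod A"
  shows "(\<lambda>i. \<Sum>k\<in>K. c k * g k i) \<in> free_mod A"
  using assms
proof (induction K rule: finite_induct)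
  case empty
  have "(\<lambda>i. \<Sum>k\<in>{}. c k * g k i) = vzero" by (simp add: vzero_def)
  then show ?case using fm_zero by metis
next
  case (insert x F)
  have gx: "g x \<in> free_mod A" using insert(4) by simp
  have gF: "\<And>k. k \<in> F \<Longrightarrow> g k \<in> free_mod A" using insert(4) by simp
  have 1: "vadd (vscale (c x) (g x)) (\<lambda>i. \<Sum>k\<in>F. c k * g k i) \<in> free_mod A"
    by (rule fm_add[OF fm_scale[OF gx] insert(3)[OF gF]])
  have 2: "(\<lambda>i. \<Sum>k\<in>insert x F. c k * g k i) = vadd (vscale (c x) (g x)) (\<lambda>i. \<Sum>k\<in>F. c k * g k i)"
    using insert(1,2) by (simp add: vadd_def vscale_def)
  show ?case unfolding 2 by (rule 1)
qed

lemma lin_zero: "lin_on (free_mod A) h \<Longrightarrow> h vzero = vzero"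
proof -
  assume l: "lin_on (free_mod A) h"
  have "h (vscale 0 vzero) = vscale 0 (h vzero)" using l fm_zero[of A] unfolding lin_on_def by blast
  then show ?thesis by (simp add: vscale_def vzero_def)
qed

lemma lin_add: "lin_on (free_mod A) h \<Longrightarrow> u \<in> free_mod A \<Longrightarrow> v \<in> free_mod A \<Longrightarrow>
   h (\<lambda>i. u i + v i) = (\<lambda>i. h u i + h v i)"
  unfolding lin_on_def vadd_def by blast

lemma lin_scale: "lin_on (free_mod A) h \<Longrightarrow> u \<in> free_mod A \<Longrightarrow>
   h (\<lambda>i. r * u i) = (\<lambda>i. r * h u i)"
  unfolding lin_on_def vscale_def by blast

lemma lin_sum: assumes "lin_on (free_mod A) h" "finite K" "\<And>k. k \<in> K \<Longrightarrow> g k \<in> free_mod A"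
  shows "h (\<lambda>i. \<Sum>k\<in>K. c k * g k i) = (\<lambda>i. \<Sum>k\<in>K. c k * h (g k) i)"
  using assms(2,3)
proof (induction K rule: finite_induct)
  case empty
  then show ?case using lin_zero[OF assms(1)] by (simp add: vzero_def)
next
  case (insert x F)
  have gx: "g x \<in> free_mod A" using insert(4) by simp
  have gF: "\<And>k. k \<in> F \<Longrightarrow> g k \<in> free_mod A" using insert(4) by simp
  have s1: "(\<lambda>i. c x * g x i) \<in> free_mod A" using fm_scale[OF gx, of "c x"] by (simp add: vscale_def)
  have s2: "(\<lambda>i. \<Sum>k\<in>F. c k * g k i) \<in> free_mod A" using fm_sum[of F g A c] insert(1) gF by blast
  have "h (\<lambda>i. c x * g x i + (\<Sum>k\<in>F. c k * g k i)) =
        (\<lambda>i. h (\<lambda>i. c x * g x i) i + h (\<lambda>i. \<Sum>k\<in>F. c k * g k i) i)"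
    by (rule lin_add[OF assms(1) s1 s2])
  also have "\<dots> = (\<lambda>i. c x * h (g x) i + (\<Sum>k\<in>F. c k * h (g k) i))"
    by (simp only: insert(3)[OF gF] lin_scale[OF assms(1) gx])
  finally have e1: "h (\<lambda>i. c x * g x i + (\<Sum>k\<in>F. c k * g k i)) = (\<lambda>i. c x * h (g x) i + (\<Sum>k\<in>F. c k * h (g k) i))" .
  moreover have e2: "(\<lambda>i. \<Sum>k\<in>insert x F. c k * g k i) = (\<lambda>i. c x * g x i + (\<Sum>k\<in>F. c k * g k i))"
    using insert(1,2) by simp
  moreover have e3: "(\<lambda>i. \<Sum>k\<in>insert x F. c k * h (g k) i) = (\<lambda>i. c x * h (g x) i + (\<Sum>k\<in>F. c k * h (g k) i))"
    using insert(1,2) by simp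
  show ?case unfolding e2 e3 by (rule e1)
qed



locale kz =
  fixes B :: "nat \<Rightarrow> 'i set" and i0 :: 'i and d :: "nat \<Rightarrow> ('i \<Rightarrow> 'a::comm_ring_1) \<Rightarrow> ('i \<Rightarrow> 'a)"
    and prod :: "nat \<Rightarrow> ('i \<Rightarrow> 'a) \<Rightarrow> ('i \<Rightarrow> 'a) \<Rightarrow> ('i \<Rightarrow> 'a)" and a :: "nat \<Rightarrow> 'a" and n :: nat
    and fe :: "nat \<Rightarrow> 'i \<Rightarrow> 'a"
  assumes d_lin: "\<And>i. lin_on (free_mod (B i)) (d i)"
  and d0: "\<And>f. f \<in> free_mod (B 0) \<Longrightarrow> d 0 f = vzero"
  and d_deg: "\<And>i f. f \<in> free_mod (B (Suc i)) \<Longrightarrow> d (Suc i) f \<in> free_mod (B i)"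
  and p_lin2: "\<And>i u. u \<in> free_mod (B 1) \<Longrightarrow> lin_on (free_mod (B i)) (prod i u)"
  and p_lin1: "\<And>i v. v \<in> free_mod (B i) \<Longrightarrow> lin_on (free_mod (B 1)) (\<lambda>u. prod i u v)"
  and p_deg: "\<And>i f1 f. f1 \<in> free_mod (B 1) \<Longrightarrow> f \<in> free_mod (B i) \<Longrightarrow> prod i f1 f \<in> free_mod (B (Suc i))"
  and p_a0: "\<And>f1 f. f1 \<in> free_mod (B 1) \<Longrightarrow> f \<in> free_mod (B 0) \<Longrightarrow>
                    d 1 (prod 0 f1 f) = vscale (d 1 f1 i0) f"
  and p_a: "\<And>i f1 f. f1 \<in> free_mod (B 1) \<Longrightarrow> f \<in> free_mod (B (Suc i)) \<Longrightarrow>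
                    d (Suc (Suc i)) (prod (Suc i) f1 f) =
                      vadd (vscale (d 1 f1 i0) f) (vscale (-1) (prod i f1 (d (Suc i) f)))"
  and p_b: "\<And>i f1 f. f1 \<in> free_mod (B 1) \<Longrightarrow> f \<in> free_mod (B i) \<Longrightarrow>
                    prod (Suc i) f1 (prod i f1 f) = vzero"
  and fe_mem: "\<And>j. fe j \<in> free_mod (B 1)"
  and fe_d: "\<And>j. j < n \<Longrightarrow> d 1 (fe j) i0 = a j"
begin

fun E :: "nat list \<Rightarrow> nat \<Rightarrow> ('i \<Rightarrow> 'a) \<Rightarrow> ('i \<Rightarrow> 'a)" where
  "E [] q f = f"
| "E (j # js) q f = prod (q + length js) (fe j) (E js q f)"

definition ES :: "nat set \<Rightarrow> nat \<Rightarrow> ('i \<Rightarrow> 'a) \<Rightarrow> ('i \<Rightarrow> 'a)" where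
  "ES S q f = E (sorted_list_of_set S) q f"

lemma E_mem: "f \<in> free_mod (B q) \<Longrightarrow> E js q f \<in> free_mod (B (q + length js))"
  by (induction js) (auto intro: p_deg fe_mem)

lemma E_lin: "lin_on (free_mod (B q)) (E js q)"
proof (induction js)
  case Nil
  then show ?case by (simp add: lin_on_def)
next
  case (Cons j js)
  show ?case unfolding lin_on_def
  proof (intro conjI ballI allI)
    fix u v :: "'i \<Rightarrow> 'a" assume u: "u \<in> free_mod (B q)" and v: "v \<in> free_mod (B q)"
    show "E (j # js) q (vadd u v) = vadd (E (j # js) q u) (E (j # js) q v)"
      using Cons p_lin2[OF fe_mem, of "q + length js" j] E_mem[OF u, of js] E_mem[OF v, of js]
      by (simp add: lin_on_def u v)
  next
    fix r and u :: "'i \<Rightarrow> 'a" assume u: "u \<in> free_mod (B q)"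
    show "E (j # js) q (vscale r u) = vscale r (E (j # js) q u)"
      using Cons p_lin2[OF fe_mem, of "q + length js" j] E_mem[OF u, of js]
      by (simp add: lin_on_def u)
  qed
qed

lemma ES_mem: "f \<in> free_mod (B q) \<Longrightarrow> finite S \<Longrightarrow> ES S q f \<in> free_mod (B (q + card S))"
  unfolding ES_def using E_mem[of f q "sorted_list_of_set S"] by simp

lemma ES_lin: "lin_on (free_mod (B q)) (ES S q)"
proof -
  have "ES S q = E (sorted_list_of_set S) q" by (simp add: fun_eq_iff ES_def)
  then show ?thesis using E_lin by simp
qed

lemma ES_empty[simp]: "ES {} q f = f"
  by (simp add: ES_def)

lemma ES_Min: "finite S \<Longrightarrow> S \<noteq> {} \<Longrightarrow>
   ES S q f = prod (q + card S - 1) (fe (Min S)) (ES (S - {Min S}) q f)"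
proof -
  assume S: "finite S" "S \<noteq> {}"
  have c: "card (S - {Min S}) = card S - 1" using S by (simp add: Min_in)
  have "card S > 0" using S by auto
  then have "q + card S - 1 = q + length (sorted_list_of_set (S - {Min S}))" using c by simp
  then show ?thesis unfolding ES_def using sorted_list_of_set_nonempty[OF S] by simp
qed

lemma anticomm:
  assumes g: "g \<in> free_mod (B k)"
  shows "prod (Suc k) (fe j) (prod k (fe l) g) = vscale (-1) (prod (Suc k) (fe l) (prod k (fe j) g))"
proof -
  define u where "u = fe j"
  define v where "v = fe l"
  define w where "w = vadd u v"
  have u: "u \<in> free_mod (B 1)" and v: "v \<in> free_mod (B 1)" and w: "w \<in> free_mod (B 1)"
    using fe_mem by (auto simp: u_def v_def w_def intro: fm_add)
  define P where "P = prod k u g"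
  define Q where "Q = prod k v g"
  have P: "P \<in> free_mod (B (Suc k))" and Q: "Q \<in> free_mod (B (Suc k))"
    using p_deg u v g by (auto simp: P_def Q_def)
  have 1: "prod k w g = vadd P Q"
    using p_lin1[OF g] u v by (simp add: lin_on_def w_def P_def Q_def)
  have 2: "prod (Suc k) w (vadd P Q) = vadd (prod (Suc k) w P) (prod (Suc k) w Q)"
    using p_lin2[OF w] P Q by (simp add: lin_on_def)
  have 3: "prod (Suc k) w P = vadd (prod (Suc k) u P) (prod (Suc k) v P)"
    using p_lin1[OF P] u v by (simp add: lin_on_def w_def)
  have 4: "prod (Suc k) w Q = vadd (prod (Suc k) u Q) (prod (Suc k) v Q)"
    using p_lin1[OF Q] u v by (simp add: lin_on_def w_def)
  have 5: "prod (Suc k) u P = vzero" "prod (Suc k) v Q = vzero"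
    using p_b u v g by (auto simp: P_def Q_def)
  have 6: "prod (Suc k) w (prod k w g) = vzero" using p_b w g by auto
  have "\<forall>x. prod (Suc k) u Q x = - prod (Suc k) v P x"
  proof
    fix x
    have "0 = (0 + prod (Suc k) v P x) + (prod (Suc k) u Q x + 0)"
      using 6 unfolding 1 2 3 4 5 by (simp add: vadd_def vzero_def fun_eq_iff)
    then show "prod (Suc k) u Q x = - prod (Suc k) v P x"
      by (simp add: add_eq_0_iff)
  qed
  then have "prod (Suc k) u Q = vscale (-1) (prod (Suc k) v P)"
    by (simp add: vscale_def fun_eq_iff)
  then show ?thesis unfolding u_def v_def P_def Q_def .
qed

end


context kz begin

lemma p_zero: "prod k (fe j) vzero = vzero"
  using lin_zero[OF p_lin2[OF fe_mem]] .

lemma p_scale: "g \<in> free_mod (B k) \<Longrightarrow> prod k (fe j) (vscale c g) = vscale c (prod k (fe j) g)"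
  using p_lin2[OF fe_mem, of k j] unfolding lin_on_def by blast

lemma ES_zero: "ES S q vzero = vzero"
  using lin_zero[OF ES_lin] .

lemma ES_single: "ES {j} q f = prod q (fe j) f"
  using ES_Min[of "{j}" q f] by simp

lemma ES_ins_aux:
  assumes f: "f \<in> free_mod (B q)"
  shows "\<forall>(T::nat set) (j::nat). card T = N \<longrightarrow> finite T \<longrightarrow> prod (q + card T) (fe j) (ES T q f) =
     (if j \<in> T then vzero else vscale ((-1) ^ card {t\<in>T. t < j}) (ES (insert j T) q f))"
proof (induction N rule: less_induct)
  case (less N)
  show ?case
  proof (intro allI impI)
    fix T :: "nat set" and j :: nat assume cT: "card T = N" and T: "finite T"
    show "prod (q + card T) (fe j) (ES T q f) =
     (if j \<in> T then vzero else vscale ((-1) ^ card {t\<in>T. t < j}) (ES (insert j T) q f))"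
    proof (cases "T = {}")
      case True
      then show ?thesis by (simp add: ES_single vscale_def)
    next
      case False
      define m where "m = Min T"
      define T' where "T' = T - {m}"
      have mT: "m \<in> T" using False T by (simp add: m_def)
      have mle: "\<And>t. t \<in> T \<Longrightarrow> m \<le> t" using T by (simp add: m_def)
      have T': "finite T'" using T by (simp add: T'_def)
      have cT': "card T = Suc (card T')" using T mT card_gt_0_iff[of T] by (auto simp: T'_def)
      define k where "k = q + card T'"
      have X: "ES T' q f \<in> free_mod (B k)" using ES_mem[OF f T'] by (simp add: k_def)
      have ET: "ES T q f = prod k (fe m) (ES T' q f)"
        using ES_Min[OF T False, of q f] cT' by (simp add: m_def T'_def k_def)
      have qT: "q + card T = Suc k" using cT' by (simp add: k_def)
      consider "j = m" | "j < m" | "m < j" by linarith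
      then show ?thesis
      proof cases
        case 1
        then show ?thesis unfolding qT ET using p_b[OF fe_mem X] mT by simp
      next
        case 2
        have jT: "j \<notin> T" using 2 mle by force
        have cnt: "{t\<in>T. t < j} = {}" using 2 mle by force
        have "ES (insert j T) q f = prod (q + card T) (fe j) (ES T q f)"
        proof -
          have mi: "Min (insert j T) = j" using Min_insert[OF T False, of j] 2 by (simp add: m_def)
          have "insert j T - {j} = T" using jT by auto
          then show ?thesis using ES_Min[of "insert j T" q f] mi T jT by simp
        qed
        then show ?thesis using jT unfolding cnt by (simp add: vscale_def)
      next
        case 3
        have IH: "prod k (fe j) (ES T' q f) =
            (if j \<in> T' then vzero else vscale ((-1) ^ card {t\<in>T'. t < j}) (ES (insert j T') q f))"
          using less[rule_format, of "card T'" T' j] cT cT' T' by (simp add: k_def)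
        have jT: "j \<in> T \<longleftrightarrow> j \<in> T'" using 3 by (auto simp: T'_def)
        have L: "prod (q + card T) (fe j) (ES T q f) =
            vscale (-1) (prod (Suc k) (fe m) (prod k (fe j) (ES T' q f)))"
          unfolding qT ET by (rule anticomm[OF X])
        show ?thesis
        proof (cases "j \<in> T")
          case True
          then show ?thesis unfolding L IH using jT p_zero by (simp add: vscale_def vzero_def)
        next
          case False
          define c where "c = ((-1::'a) ^ card {t\<in>T'. t < j})"
          have Y: "ES (insert j T') q f \<in> free_mod (B (Suc k))"
            using ES_mem[OF f, of "insert j T'"] T' False jT by (simp add: k_def)
          have ins: "ES (insert j T) q f = prod (Suc k) (fe m) (ES (insert j T') q f)"
          proof -
            have mi: "Min (insert j T) = m" using Min_insert[OF T \<open>T \<noteq> {}\<close>, of j] 3 by (simp add: m_def)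
            have e: "insert j T - {m} = insert j T'" using 3 by (auto simp: T'_def)
            have "card (insert j T) = Suc (Suc k) - q" using False T qT by simp
            then show ?thesis using ES_Min[of "insert j T" q f] mi e T qT by simp
          qed
          have cnt: "card {t\<in>T. t < j} = Suc (card {t\<in>T'. t < j})"
          proof -
            have "{t\<in>T. t < j} = insert m {t\<in>T'. t < j}" using 3 mT by (auto simp: T'_def)
            then show ?thesis using T' by (simp add: T'_def)
          qed
          show ?thesis unfolding L IH using False jT p_scale[OF Y] ins cnt
            by (simp add: vscale_def c_def)
        qed
      qed
    qed
  qed
qed

lemma ES_ins:
  assumes "f \<in> free_mod (B q)" "finite T"
  shows "prod (q + card T) (fe j) (ES T q f) =
     (if j \<in> T then vzero else vscale ((-1) ^ card {t\<in>T. t < j}) (ES (insert j T) q f))"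
  using ES_ins_aux[OF assms(1), of "card T"] assms(2) by blast

end


context kz begin

lemma ksign_empty: "ksign {} T = 1"
  by (simp add: ksign_def)

lemma ksign_split:
  assumes S': "finite S'" and T: "finite T" and m: "m \<notin> S'"
  shows "ksign (insert m S') T = ksign S' T * (-1) ^ card {t\<in>T. t < m}"
proof -
  define P where "P = {(s, t). s \<in> S' \<and> t \<in> T \<and> t < s}"
  define Q where "Q = (\<lambda>t. (m, t)) ` {t\<in>T. t < m}"
  have e: "{(s, t). s \<in> insert m S' \<and> t \<in> T \<and> t < s} = P \<union> Q"
    by (auto simp: P_def Q_def)
  have fP: "finite P"
  proof -
    have "P \<subseteq> S' \<times> T" by (auto simp: P_def)
    then show ?thesis using finite_subset S' T by blast
  qed
  have fQ: "finite Q" using T by (simp add: Q_def)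
  have d: "P \<inter> Q = {}" using m by (auto simp: P_def Q_def)
  have cQ: "card Q = card {t\<in>T. t < m}" unfolding Q_def by (rule card_image) (simp add: inj_on_def)
  have "card (P \<union> Q) = card P + card Q" using card_Un_disjoint[OF fP fQ d] .
  then show ?thesis unfolding ksign_def e using cQ by (simp add: P_def power_add)
qed

lemma ES_comp_aux:
  assumes f: "f \<in> free_mod (B q)" and T: "finite T"
  shows "\<forall>(S::nat set). card S = N \<longrightarrow> finite S \<longrightarrow> ES S (q + card T) (ES T q f) =
    (if S \<inter> T = {} then vscale (ksign S T) (ES (S \<union> T) q f) else vzero)"
proof (induction N rule: less_induct)
  case (less N)
  show ?case
  proof (intro allI impI)
    fix S :: "nat set" assume cS: "card S = N" and S: "finite S"
    define g where "g = ES T q f"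
    have g: "g \<in> free_mod (B (q + card T))" using ES_mem[OF f T] by (simp add: g_def)
    show "ES S (q + card T) (ES T q f) =
      (if S \<inter> T = {} then vscale (ksign S T) (ES (S \<union> T) q f) else vzero)"
    proof (cases "S = {}")
      case True
      then show ?thesis by (simp add: ksign_empty vscale_def)
    next
      case False
      define m where "m = Min S"
      define S' where "S' = S - {m}"
      have mS: "m \<in> S" using False S by (simp add: m_def)
      have mle: "\<And>t. t \<in> S \<Longrightarrow> m \<le> t" using S by (simp add: m_def)
      have S': "finite S'" using S by (simp add: S'_def)
      have mS': "m \<notin> S'" by (simp add: S'_def)
      have Sins: "S = insert m S'" using mS by (auto simp: S'_def)
      have cS': "card S = Suc (card S')" using S mS card_gt_0_iff[of S] by (auto simp: S'_def)
      have ES: "ES S (q + card T) g = prod (q + card T + card S') (fe m) (ES S' (q + card T) g)"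
        using ES_Min[OF S False, of "q + card T" g] cS' by (simp add: m_def S'_def)
      have IH: "ES S' (q + card T) g =
          (if S' \<inter> T = {} then vscale (ksign S' T) (ES (S' \<union> T) q f) else vzero)"
        using less[rule_format, of "card S'" S'] cS cS' S' by (simp add: g_def)
      show ?thesis
      proof (cases "S' \<inter> T = {}")
        case False
        then have "S \<inter> T \<noteq> {}" using Sins by auto
        then show ?thesis using False ES IH p_zero by (simp add: g_def)
      next
        case True
        define U where "U = S' \<union> T"
        have U: "finite U" using S' T by (simp add: U_def)
        have cU: "card U = card S' + card T" using card_Un_disjoint[OF S' T True] by (simp add: U_def)
        have Z: "ES U q f \<in> free_mod (B (q + card U))" using ES_mem[OF f U] .
        have idx: "q + card T + card S' = q + card U" using cU by simp
        have 1: "ES S (q + card T) g = vscale (ksign S' T) (prod (q + card U) (fe m) (ES U q f))"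
          using ES IH True p_scale[OF Z] idx by (simp add: U_def)
        have 2: "prod (q + card U) (fe m) (ES U q f) =
           (if m \<in> U then vzero else vscale ((-1) ^ card {t\<in>U. t < m}) (ES (insert m U) q f))"
          using ES_ins[OF f U] .
        show ?thesis
        proof (cases "m \<in> T")
          case True
          then have "S \<inter> T \<noteq> {}" using mS by auto
          then show ?thesis using 1 2 True by (simp add: g_def U_def vscale_def vzero_def)
        next
          case False
          have ST: "S \<inter> T = {}" using Sins False True by auto
          have mU: "m \<notin> U" using False mS' by (simp add: U_def)
          have cnt: "{t\<in>U. t < m} = {t\<in>T. t < m}"
            using mle mS' by (force simp: U_def S'_def)
          have iU: "insert m U = S \<union> T" using Sins by (simp add: U_def)
          have ks: "ksign S T = ksign S' T * (-1) ^ card {t\<in>T. t < m}"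
            using ksign_split[OF S' T mS'] Sins by simp
          show ?thesis using 1 2 ST mU unfolding cnt iU ks
            by (simp add: g_def vscale_def mult.assoc)
        qed
      qed
    qed
  qed
qed

lemma ES_comp:
  assumes "f \<in> free_mod (B q)" "finite T" "finite S"
  shows "ES S (q + card T) (ES T q f) =
    (if S \<inter> T = {} then vscale (ksign S T) (ES (S \<union> T) q f) else vzero)"
  using ES_comp_aux[OF assms(1,2), of "card S"] assms(3) by blast

end


context kz begin

lemma dmem: "f \<in> free_mod (B q) \<Longrightarrow> d q f \<in> free_mod (B (q - 1))"
proof (cases q)
  case 0
  assume "f \<in> free_mod (B q)"
  then show ?thesis using 0 d0 fm_zero by simp
next
  case (Suc i)
  assume "f \<in> free_mod (B q)"
  then show ?thesis using Suc d_deg by simp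
qed

lemma ES_d_aux:
  assumes f: "f \<in> free_mod (B q)"
  shows "\<forall>(S::nat set). card S = N \<longrightarrow> finite S \<longrightarrow> S \<subseteq> {..<n} \<longrightarrow>
    d (q + card S) (ES S q f) =
    (\<lambda>x. (\<Sum>j\<in>S. (-1) ^ card {s\<in>S. s < j} * a j * ES (S - {j}) q f x)
          + (-1) ^ card S * ES S (q - 1) (d q f) x)"
proof (induction N rule: less_induct)
  case (less N)
  show ?case
  proof (intro allI impI)
    fix S :: "nat set" assume cS: "card S = N" and S: "finite S" and Sn: "S \<subseteq> {..<n}"
    show "d (q + card S) (ES S q f) =
      (\<lambda>x. (\<Sum>j\<in>S. (-1) ^ card {s\<in>S. s < j} * a j * ES (S - {j}) q f x)
          + (-1) ^ card S * ES S (q - 1) (d q f) x)"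
    proof (cases "S = {}")
      case True
      then show ?thesis by simp
    next
      case False
      define m where "m = Min S"
      define S' where "S' = S - {m}"
      have mS: "m \<in> S" using False S by (simp add: m_def)
      have mle: "\<And>t. t \<in> S \<Longrightarrow> m \<le> t" using S by (simp add: m_def)
      have S': "finite S'" using S by (simp add: S'_def)
      have mS': "m \<notin> S'" by (simp add: S'_def)
      have Sins: "S = insert m S'" using mS by (auto simp: S'_def)
      have cS': "card S = Suc (card S')" using S mS card_gt_0_iff[of S] by (auto simp: S'_def)
      have mn: "m < n" using mS Sn by auto
      define k where "k = q + card S'"
      define X where "X = ES S' q f"
      have X: "X \<in> free_mod (B k)" using ES_mem[OF f S'] by (simp add: k_def X_def)
      have ES: "ES S q f = prod k (fe m) X"
        using ES_Min[OF S False, of q f] cS' by (simp add: m_def S'_def k_def X_def)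
      have qS: "q + card S = Suc k" using cS' by (simp add: k_def)
      have IH: "d k X =
         (\<lambda>x. (\<Sum>j\<in>S'. (-1) ^ card {s\<in>S'. s < j} * a j * ES (S' - {j}) q f x)
          + (-1) ^ card S' * ES S' (q - 1) (d q f) x)"
        using less[rule_format, of "card S'" S'] cS cS' S' Sn by (auto simp: k_def X_def S'_def)
      show ?thesis
      proof (cases k)
        case 0
        then have q0: "q = 0" and S'0: "S' = {}" using S' by (auto simp: k_def)
        have Sm: "S = {m}" using Sins S'0 by simp
        have "d (q + card S) (ES S q f) = vscale (a m) f"
          unfolding qS ES 0 using p_a0[OF fe_mem, of X m] X fe_d[OF mn] 0 q0 S'0
          by (simp add: X_def)
        moreover have "ES S (q - 1) (d q f) = vzero" using q0 d0[OF f[unfolded q0]] ES_zero by simp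
        moreover have "{s\<in>S. s < m} = {}" using mle by force
        ultimately show ?thesis using Sm q0 by (simp add: vscale_def vzero_def fun_eq_iff del: Collect_empty_eq)
      next
        case (Suc i)
        define W where "W = ES S' (q - 1) (d q f)"
        have WR: "W \<in> free_mod (B i) \<and> ES S (q - 1) (d q f) = prod i (fe m) W"
        proof (cases q)
          case 0
          have "d q f = vzero" using 0 d0 f by simp
          then show ?thesis using ES_zero p_zero fm_zero by (simp add: W_def)
        next
          case (Suc q')
          have "W \<in> free_mod (B (q - 1 + card S'))" unfolding W_def
            using ES_mem[OF dmem[OF f] S'] .
          moreover have "q - 1 + card S' = i" using Suc \<open>k = Suc i\<close> by (simp add: k_def)
          moreover have "ES S (q - 1) (d q f) = prod (q - 1 + card S - 1) (fe m) W"
            using ES_Min[OF S False, of "q - 1" "d q f"] by (simp add: m_def S'_def W_def)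
          moreover have "q - 1 + card S - 1 = i" using Suc \<open>k = Suc i\<close> cS' by (simp add: k_def)
          ultimately show ?thesis by simp
        qed
        have Tj: "ES (S' - {j}) q f \<in> free_mod (B i) \<and> ES (S - {j}) q f = prod i (fe m) (ES (S' - {j}) q f)"
          if j: "j \<in> S'" for j
        proof -
          have cj: "card (S' - {j}) = card S' - 1" using j S' by simp
          have c1: "card S' \<ge> 1" using j S' card_gt_0_iff[of S'] by auto
          have "ES (S' - {j}) q f \<in> free_mod (B (q + card (S' - {j})))" using ES_mem[OF f] S' by simp
          moreover have "q + card (S' - {j}) = i" using cj c1 \<open>k = Suc i\<close> by (simp add: k_def)
          moreover have "ES (S - {j}) q f = prod i (fe m) (ES (S' - {j}) q f)"
          proof -
            have f1: "finite (S - {j})" using S by simp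
            have ne: "S - {j} \<noteq> {}" using mS j mS' by auto
            have mi: "Min (S - {j}) = m"
              using mS j mS' mle f1 by (intro Min_eqI) auto
            have e: "S - {j} - {m} = S' - {j}" by (auto simp: S'_def)
            have "card (S - {j}) = card S'" using j S cS' Sins by simp
            then have "q + card (S - {j}) - 1 = i" using c1 \<open>k = Suc i\<close> by (simp add: k_def)
            then show ?thesis using ES_Min[OF f1 ne, of q f] mi e by simp
          qed
          ultimately show ?thesis by simp
        qed
        define A where "A = (\<lambda>x. \<Sum>j\<in>S'. ((-1) ^ card {s\<in>S'. s < j} * a j) * ES (S' - {j}) q f x)"
        define C where "C = (\<lambda>x. (-1) ^ card S' * W x)"
        have A: "A \<in> free_mod (B i)" unfolding A_def by (rule fm_sum[OF S']) (simp add: Tj)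
        have C: "C \<in> free_mod (B i)" unfolding C_def using fm_scale[of W "B i" "(-1) ^ card S'"] WR unfolding vscale_def by blast
        have DX: "d (Suc i) X = (\<lambda>x. A x + C x)" using IH \<open>k = Suc i\<close> by (simp add: A_def C_def W_def)
        have pA: "prod i (fe m) A = (\<lambda>x. \<Sum>j\<in>S'. ((-1) ^ card {s\<in>S'. s < j} * a j) * ES (S - {j}) q f x)"
          unfolding A_def using lin_sum[OF p_lin2[OF fe_mem] S', of "\<lambda>j. ES (S' - {j}) q f"] Tj
          by simp
        have pC: "prod i (fe m) C = (\<lambda>x. (-1) ^ card S' * ES S (q - 1) (d q f) x)"
          unfolding C_def using lin_scale[OF p_lin2[OF fe_mem]] WR by simp
        have L: "d (q + card S) (ES S q f) =
            (\<lambda>x. a m * X x + (-1) * ((\<Sum>j\<in>S'. ((-1) ^ card {s\<in>S'. s < j} * a j) * ES (S - {j}) q f x)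
               + (-1) ^ card S' * ES S (q - 1) (d q f) x))"
        proof -
          have "d (q + card S) (ES S q f) = d (Suc (Suc i)) (prod (Suc i) (fe m) X)"
            using qS ES \<open>k = Suc i\<close> by simp
          also have "\<dots> = vadd (vscale (a m) X) (vscale (-1) (prod i (fe m) (\<lambda>x. A x + C x)))"
            using p_a[OF fe_mem, of X i m] X \<open>k = Suc i\<close> DX fe_d[OF mn] by simp
          also have "prod i (fe m) (\<lambda>x. A x + C x) = (\<lambda>x. prod i (fe m) A x + prod i (fe m) C x)"
            by (rule lin_add[OF p_lin2[OF fe_mem] A C])
          finally show ?thesis unfolding pA pC by (simp add: vadd_def vscale_def)
        qed
        have sgn: "(-1::'a) ^ card {s\<in>S. s < j} = (-1) * (-1) ^ card {s\<in>S'. s < j}" if j: "j \<in> S'" for j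
        proof -
          have mj: "m < j"
          proof -
            have "m \<le> j" using mle[of j] j Sins by simp
            moreover have "m \<noteq> j" using j mS' by auto
            ultimately show ?thesis by simp
          qed
          have "{s\<in>S. s < j} = insert m {s\<in>S'. s < j}"
            using mj Sins by auto
          then show ?thesis using S' mS' by simp
        qed
        have m0: "{s\<in>S. s < m} = {}" using mle by force
        have Sm: "S - {m} = S'" by (simp add: S'_def)
        have R: "(\<Sum>j\<in>S. (-1) ^ card {s\<in>S. s < j} * a j * ES (S - {j}) q f x) =
             a m * X x + (-1) * (\<Sum>j\<in>S'. ((-1) ^ card {s\<in>S'. s < j} * a j) * ES (S - {j}) q f x)" for x
        proof -
          have "(\<Sum>j\<in>S. (-1) ^ card {s\<in>S. s < j} * a j * ES (S - {j}) q f x) =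
             (-1) ^ card {s\<in>S. s < m} * a m * ES (S - {m}) q f x +
             (\<Sum>j\<in>S'. (-1) ^ card {s\<in>S. s < j} * a j * ES (S - {j}) q f x)"
            using Sins S' mS' by simp
          also have "(\<Sum>j\<in>S'. (-1) ^ card {s\<in>S. s < j} * a j * ES (S - {j}) q f x) =
              (\<Sum>j\<in>S'. (-1) * (((-1) ^ card {s\<in>S'. s < j} * a j) * ES (S - {j}) q f x))"
            by (rule sum.cong) (simp_all add: sgn)
          also have "\<dots> = (-1) * (\<Sum>j\<in>S'. ((-1) ^ card {s\<in>S'. s < j} * a j) * ES (S - {j}) q f x)"
            by (simp add: sum_distrib_left)
          finally show ?thesis unfolding m0 Sm by (simp add: X_def)
        qed
        show ?thesis unfolding L R fun_eq_iff using cS' by (simp add: algebra_simps)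
      qed
    qed
  qed
qed

lemma ES_d:
  assumes "f \<in> free_mod (B q)" "finite S" "S \<subseteq> {..<n}"
  shows "d (q + card S) (ES S q f) =
    (\<lambda>x. (\<Sum>j\<in>S. (-1) ^ card {s\<in>S. s < j} * a j * ES (S - {j}) q f x)
          + (-1) ^ card S * ES S (q - 1) (d q f) x)"
  using ES_d_aux[OF assms(1), of "card S"] assms(2,3) by blast

end


context kz begin

definition Ks :: "nat \<Rightarrow> nat set set" where
  "Ks p = {S. S \<subseteq> {..<n} \<and> card S = p}"

definition act :: "nat \<Rightarrow> nat \<Rightarrow> (nat set \<Rightarrow> 'a) \<Rightarrow> ('i \<Rightarrow> 'a) \<Rightarrow> ('i \<Rightarrow> 'a)" where
  "act p q x f = (\<lambda>i. \<Sum>S\<in>Ks p. x S * ES S q f i)"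

lemma Ks_finite: "finite (Ks p)"
proof -
  have "Ks p \<subseteq> Pow {..<n}" by (auto simp: Ks_def)
  then show ?thesis using finite_subset by blast
qed

lemma Ks_mem_finite: "S \<in> Ks p \<Longrightarrow> finite S"
  unfolding Ks_def using finite_subset by blast

lemma Ks0: "Ks 0 = {{}}"
proof -
  have "\<And>S. S \<subseteq> {..<n} \<Longrightarrow> card S = 0 \<Longrightarrow> S = {}"
    using finite_subset by fastforce
  then show ?thesis by (auto simp: Ks_def)
qed

lemma act_lin_f: "lin_on (free_mod (B q)) (act p q x)"
  unfolding lin_on_def
proof (intro conjI ballI allI)
  fix u v :: "'i \<Rightarrow> 'a" assume u: "u \<in> free_mod (B q)" and v: "v \<in> free_mod (B q)"
  have "\<And>S. ES S q (vadd u v) = vadd (ES S q u) (ES S q v)"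
    using ES_lin u v unfolding lin_on_def by blast
  then show "act p q x (vadd u v) = vadd (act p q x u) (act p q x v)"
    by (simp add: act_def vadd_def distrib_left sum.distrib)
next
  fix r and u :: "'i \<Rightarrow> 'a" assume u: "u \<in> free_mod (B q)"
  have "\<And>S. ES S q (vscale r u) = vscale r (ES S q u)"
    using ES_lin u unfolding lin_on_def by blast
  then show "act p q x (vscale r u) = vscale r (act p q x u)"
    by (simp add: act_def vscale_def sum_distrib_left mult.left_commute)
qed

lemma act_lin_x: "lin_on A (\<lambda>x. act p q x f)"
  unfolding lin_on_def
  by (simp add: act_def vadd_def vscale_def distrib_right sum.distrib sum_distrib_left mult.assoc)

lemma act_mem: "f \<in> free_mod (B q) \<Longrightarrow> act p q x f \<in> free_mod (B (p + q))"
proof -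
  assume f: "f \<in> free_mod (B q)"
  have "\<And>S. S \<in> Ks p \<Longrightarrow> ES S q f \<in> free_mod (B (p + q))"
  proof -
    fix S assume S: "S \<in> Ks p"
    have "ES S q f \<in> free_mod (B (q + card S))" using ES_mem[OF f Ks_mem_finite[OF S]] .
    then show "ES S q f \<in> free_mod (B (p + q))" using S by (simp add: Ks_def add.commute)
  qed
  then show ?thesis unfolding act_def by (rule fm_sum[OF Ks_finite])
qed

lemma act_unit: "act 0 q kunit f = f"
  by (simp add: act_def Ks0 kunit_def)

end


context kz begin

lemma kdiff_key:
  assumes x: "x \<in> koszul n p"
  shows "(\<Sum>S\<in>Ks p. \<Sum>j\<in>S. x S * ((-1) ^ card {s\<in>S. s < j} * a j * ES (S - {j}) q f i)) =
         (\<Sum>T\<in>Ks (p - 1). kdiff a n x T * ES T q f i)"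
proof (cases "p = 0")
  case True
  have "\<And>j. x {j} = 0" using x True by (simp add: koszul_def)
  then show ?thesis using True by (simp add: Ks0 kdiff_def)
next
  case False
  define Dom where "Dom = Sigma (Ks (p - 1)) (\<lambda>T. {..<n} - T)"
  define Cod where "Cod = Sigma (Ks p) (\<lambda>S. S)"
  define h where "h = (\<lambda>(T::nat set, j::nat). (insert j T, j))"
  define g where "g = (\<lambda>(S, j). x S * ((-1) ^ card {s\<in>S. s < j} * a j * ES (S - {j}) q f i))"
  have bij: "bij_betw h Dom Cod"
    unfolding bij_betw_def
  proof
    show "inj_on h Dom"
    proof (rule inj_onI)
      fix u v assume u: "u \<in> Dom" and v: "v \<in> Dom" and e: "h u = h v"
      obtain T j where uu: "u = (T, j)" by (cases u)
      obtain T' j' where vv: "v = (T', j')" by (cases v)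
      have jj: "j = j'" and ii: "insert j T = insert j' T'" using e uu vv by (auto simp: h_def)
      have "j \<notin> T" "j' \<notin> T'" using u v uu vv by (auto simp: Dom_def)
      then have "T = T'" using ii jj by (metis Diff_insert_absorb)
      then show "u = v" using uu vv jj by simp
    qed
  next
    show "h ` Dom = Cod"
    proof
      show "h ` Dom \<subseteq> Cod"
      proof
        fix w assume "w \<in> h ` Dom"
        then obtain T j where T: "T \<in> Ks (p - 1)" and j: "j < n" "j \<notin> T" and w: "w = (insert j T, j)"
          by (auto simp: Dom_def h_def)
        have "finite T" using Ks_mem_finite[OF T] .
        then have "card (insert j T) = p" using T j False by (simp add: Ks_def)
        moreover have "insert j T \<subseteq> {..<n}" using T j by (auto simp: Ks_def)
        ultimately show "w \<in> Cod" using w by (simp add: Cod_def Ks_def)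
      qed
    next
      show "Cod \<subseteq> h ` Dom"
      proof
        fix w assume "w \<in> Cod"
        then obtain S j where S: "S \<in> Ks p" and j: "j \<in> S" and w: "w = (S, j)"
          by (auto simp: Cod_def)
        have fS: "finite S" using Ks_mem_finite[OF S] .
        have "S - {j} \<in> Ks (p - 1)" using S j fS by (auto simp: Ks_def)
        moreover have "j \<in> {..<n} - (S - {j})" using S j by (auto simp: Ks_def)
        ultimately have "(S - {j}, j) \<in> Dom" by (simp add: Dom_def)
        moreover have "h (S - {j}, j) = w" using w j by (auto simp: h_def)
        ultimately show "w \<in> h ` Dom" by force
      qed
    qed
  qed
  have "(\<Sum>S\<in>Ks p. \<Sum>j\<in>S. x S * ((-1) ^ card {s\<in>S. s < j} * a j * ES (S - {j}) q f i)) =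
        (\<Sum>w\<in>Cod. g w)"
    unfolding Cod_def g_def using Ks_finite Ks_mem_finite by (subst sum.Sigma) auto
  also have "\<dots> = (\<Sum>w\<in>Dom. g (h w))"
    using sum.reindex_bij_betw[OF bij, of g] by simp
  also have "\<dots> = (\<Sum>w\<in>Dom. (\<lambda>(T, j). (-1) ^ card {s\<in>T. s < j} * a j * x (insert j T) * ES T q f i) w)"
  proof (rule sum.cong)
    fix w assume w: "w \<in> Dom"
    obtain T j where ww: "w = (T, j)" by (cases w)
    have j: "j \<notin> T" using w ww by (auto simp: Dom_def)
    have "{s\<in>insert j T. s < j} = {s\<in>T. s < j}" by auto
    moreover have "insert j T - {j} = T" using j by auto
    ultimately show "g (h w) = (\<lambda>(T, j). (-1) ^ card {s\<in>T. s < j} * a j * x (insert j T) * ES T q f i) w"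
      using ww by (simp add: g_def h_def mult_ac)
  qed simp
  also have "\<dots> = (\<Sum>T\<in>Ks (p - 1). \<Sum>j\<in>{..<n} - T. (-1) ^ card {s\<in>T. s < j} * a j * x (insert j T) * ES T q f i)"
    unfolding Dom_def using Ks_finite by (subst sum.Sigma) auto
  also have "\<dots> = (\<Sum>T\<in>Ks (p - 1). kdiff a n x T * ES T q f i)"
    by (simp add: kdiff_def sum_distrib_right)
  finally show ?thesis .
qed

lemma act_leibniz:
  assumes x: "x \<in> koszul n p" and f: "f \<in> free_mod (B q)"
  shows "d (p + q) (act p q x f) =
     vadd (act (p - 1) q (kdiff a n x) f) (vscale ((-1) ^ p) (act p (q - 1) x (d q f)))"
proof -
  have mem: "\<And>S. S \<in> Ks p \<Longrightarrow> ES S q f \<in> free_mod (B (p + q))"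
  proof -
    fix S assume S: "S \<in> Ks p"
    have "ES S q f \<in> free_mod (B (q + card S))" using ES_mem[OF f Ks_mem_finite[OF S]] .
    then show "ES S q f \<in> free_mod (B (p + q))" using S by (simp add: Ks_def add.commute)
  qed
  have 1: "d (p + q) (act p q x f) = (\<lambda>i. \<Sum>S\<in>Ks p. x S * d (p + q) (ES S q f) i)"
    unfolding act_def by (rule lin_sum[OF d_lin Ks_finite mem])
  have 2: "d (p + q) (ES S q f) =
    (\<lambda>i. (\<Sum>j\<in>S. (-1) ^ card {s\<in>S. s < j} * a j * ES (S - {j}) q f i)
          + (-1) ^ p * ES S (q - 1) (d q f) i)" if S: "S \<in> Ks p" for S
  proof -
    have "p + q = q + card S" using S by (simp add: Ks_def)
    then show ?thesis using ES_d[OF f Ks_mem_finite[OF S]] S by (simp add: Ks_def add.commute)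
  qed
  show ?thesis
  proof (rule ext)
    fix i
    have "d (p + q) (act p q x f) i = (\<Sum>S\<in>Ks p. x S * ((\<Sum>j\<in>S. (-1) ^ card {s\<in>S. s < j} * a j * ES (S - {j}) q f i)
          + (-1) ^ p * ES S (q - 1) (d q f) i))"
      unfolding 1 using 2 by simp
    also have "\<dots> = (\<Sum>S\<in>Ks p. \<Sum>j\<in>S. x S * ((-1) ^ card {s\<in>S. s < j} * a j * ES (S - {j}) q f i))
          + (-1) ^ p * (\<Sum>S\<in>Ks p. x S * ES S (q - 1) (d q f) i)"
      by (simp add: distrib_left sum.distrib sum_distrib_left mult_ac)
    also have "\<dots> = (\<Sum>T\<in>Ks (p - 1). kdiff a n x T * ES T q f i)
          + (-1) ^ p * (\<Sum>S\<in>Ks p. x S * ES S (q - 1) (d q f) i)"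
      using kdiff_key[OF x] by simp
    also have "\<dots> = vadd (act (p - 1) q (kdiff a n x) f) (vscale ((-1) ^ p) (act p (q - 1) x (d q f))) i"
      by (simp add: vadd_def vscale_def act_def)
    finally show "d (p + q) (act p q x f) i =
      vadd (act (p - 1) q (kdiff a n x) f) (vscale ((-1) ^ p) (act p (q - 1) x (d q f))) i" .
  qed
qed

end


context kz begin

lemma act_assoc:
  assumes x: "x \<in> koszul n p" and y: "y \<in> koszul n p'" and f: "f \<in> free_mod (B q)"
  shows "act (p + p') q (kmult x y) f = act p (p' + q) x (act p' q y f)"
proof (rule ext)
  fix i
  define G where "G = (\<lambda>(S, T). x S * y T * ksign S T * ES (S \<union> T) q f i)"
  define H where "H = (\<lambda>(U, S). ksign S (U - S) * x S * y (U - S) * ES U q f i)"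
  define D where "D = {w \<in> Ks p \<times> Ks p'. fst w \<inter> snd w = {}}"
  define Sg where "Sg = Sigma (Ks (p + p')) Pow"
  define E' where "E' = {w \<in> Sg. card (snd w) = p}"
  define \<phi> where "\<phi> = (\<lambda>(S::nat set, T::nat set). (S \<union> T, S))"
  have fSg: "finite Sg" unfolding Sg_def using Ks_finite Ks_mem_finite by (intro finite_SigmaI) auto
  have fKK: "finite (Ks p \<times> Ks p')" using Ks_finite by simp
  have memT: "\<And>T. T \<in> Ks p' \<Longrightarrow> ES T q f \<in> free_mod (B (p' + q))"
  proof -
    fix T assume T: "T \<in> Ks p'"
    have "ES T q f \<in> free_mod (B (q + card T))" using ES_mem[OF f Ks_mem_finite[OF T]] .
    then show "ES T q f \<in> free_mod (B (p' + q))" using T by (simp add: Ks_def add.commute)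
  qed
  have comp: "ES S (p' + q) (ES T q f) i = (if S \<inter> T = {} then ksign S T * ES (S \<union> T) q f i else 0)"
    if S: "S \<in> Ks p" and T: "T \<in> Ks p'" for S T
  proof -
    have "p' + q = q + card T" using T by (simp add: Ks_def)
    then show ?thesis using ES_comp[OF f Ks_mem_finite[OF T] Ks_mem_finite[OF S]]
      by (simp add: vscale_def vzero_def add.commute)
  qed
  have bij: "bij_betw \<phi> D E'"
    unfolding bij_betw_def
  proof
    show "inj_on \<phi> D"
    proof (rule inj_onI)
      fix u v assume u: "u \<in> D" and v: "v \<in> D" and e: "\<phi> u = \<phi> v"
      obtain S T where uu: "u = (S, T)" by (cases u)
      obtain S' T' where vv: "v = (S', T')" by (cases v)
      have SS: "S = S'" and UU: "S \<union> T = S' \<union> T'" using e uu vv by (auto simp: \<phi>_def)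
      have "S \<inter> T = {}" "S' \<inter> T' = {}" using u v uu vv by (auto simp: D_def)
      then have "T = T'" using UU SS by blast
      then show "u = v" using uu vv SS by simp
    qed
  next
    show "\<phi> ` D = E'"
    proof
      show "\<phi> ` D \<subseteq> E'"
      proof
        fix w assume "w \<in> \<phi> ` D"
        then obtain u where u: "u \<in> D" and wu: "w = \<phi> u" by blast
        obtain S T where uu: "u = (S, T)" by (cases u)
        have S: "S \<in> Ks p" and T: "T \<in> Ks p'" and ST: "S \<inter> T = {}"
          using u uu by (simp_all add: D_def)
        have w: "w = (S \<union> T, S)" using wu uu by (simp add: \<phi>_def)
        have "card (S \<union> T) = p + p'"
          using card_Un_disjoint[OF Ks_mem_finite[OF S] Ks_mem_finite[OF T] ST] S T by (simp add: Ks_def)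
        moreover have "S \<union> T \<subseteq> {..<n}" using S T by (auto simp: Ks_def)
        ultimately show "w \<in> E'" using w S by (auto simp: E'_def Sg_def Ks_def)
      qed
    next
      show "E' \<subseteq> \<phi> ` D"
      proof
        fix w assume wE: "w \<in> E'"
        obtain U S where w: "w = (U, S)" by (cases w)
        have U: "U \<in> Ks (p + p')" and SU: "S \<subseteq> U" and cS: "card S = p"
          using wE w by (simp_all add: E'_def Sg_def)
        have fU: "finite U" using Ks_mem_finite[OF U] .
        have fS: "finite S" using finite_subset[OF SU fU] .
        have "card (U - S) = p'" using card_Diff_subset[OF fS SU] U cS by (simp add: Ks_def)
        then have T: "U - S \<in> Ks p'" using U by (auto simp: Ks_def)
        have S: "S \<in> Ks p" using U SU cS by (auto simp: Ks_def)
        have m1: "(S, U - S) \<in> D" using S T by (auto simp: D_def)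
        have m2: "\<phi> (S, U - S) = w" using w SU by (auto simp: \<phi>_def)
        show "w \<in> \<phi> ` D" by (rule image_eqI[where f=\<phi> and x="(S, U - S)", OF sym[OF m2] m1])
      qed
    qed
  qed
  have "act (p + p') q (kmult x y) f i = (\<Sum>U\<in>Ks (p + p'). \<Sum>S\<in>Pow U. ksign S (U - S) * x S * y (U - S) * ES U q f i)"
    by (simp add: act_def kmult_def sum_distrib_right)
  also have "\<dots> = (\<Sum>w\<in>Sg. H w)"
    unfolding Sg_def H_def using Ks_finite Ks_mem_finite by (subst sum.Sigma) auto
  also have "\<dots> = (\<Sum>w\<in>Sg. if card (snd w) = p then H w else 0)"
  proof (rule sum.cong)
    fix w assume w: "w \<in> Sg"
    obtain U S where ww: "w = (U, S)" by (cases w)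
    have "S \<subseteq> {..<n}" using w ww by (auto simp: Sg_def Ks_def)
    then have "card S \<noteq> p \<Longrightarrow> x S = 0" using x by (simp add: koszul_def)
    then show "H w = (if card (snd w) = p then H w else 0)" using ww by (auto simp: H_def)
  qed simp
  also have "\<dots> = (\<Sum>w\<in>E'. H w)"
    unfolding E'_def using sum.inter_filter[OF fSg, of H "\<lambda>w. card (snd w) = p"] by simp
  also have "\<dots> = (\<Sum>w\<in>D. H (\<phi> w))"
    using sum.reindex_bij_betw[OF bij, of H] by simp
  also have "\<dots> = (\<Sum>w\<in>D. G w)"
  proof (rule sum.cong)
    fix w assume w: "w \<in> D"
    obtain S T where ww: "w = (S, T)" by (cases w)
    have "S \<inter> T = {}" using w ww by (auto simp: D_def)
    then have "S \<union> T - S = T" by auto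
    then show "H (\<phi> w) = G w" using ww by (simp add: H_def G_def \<phi>_def mult_ac)
  qed simp
  also have "\<dots> = (\<Sum>w\<in>Ks p \<times> Ks p'. if fst w \<inter> snd w = {} then G w else 0)"
    unfolding D_def using sum.inter_filter[OF fKK, of G "\<lambda>w. fst w \<inter> snd w = {}"] by simp
  also have "\<dots> = (\<Sum>(S, T)\<in>Ks p \<times> Ks p'. x S * (y T * ES S (p' + q) (ES T q f) i))"
  proof (rule sum.cong[OF refl])
    fix w assume w: "w \<in> Ks p \<times> Ks p'"
    obtain S T where ww: "w = (S, T)" by (cases w)
    have S: "S \<in> Ks p" and T: "T \<in> Ks p'" using w ww by auto
    show "(if fst w \<inter> snd w = {} then G w else 0) = (\<lambda>(S, T). x S * (y T * ES S (p' + q) (ES T q f) i)) w"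
      using comp[OF S T] ww by (simp add: G_def mult_ac)
  qed
  also have "\<dots> = (\<Sum>S\<in>Ks p. \<Sum>T\<in>Ks p'. x S * (y T * ES S (p' + q) (ES T q f) i))"
    by (rule sum.cartesian_product[symmetric])
  also have "\<dots> = act p (p' + q) x (act p' q y f) i"
  proof -
    have "\<And>S. ES S (p' + q) (act p' q y f) = (\<lambda>i. \<Sum>T\<in>Ks p'. y T * ES S (p' + q) (ES T q f) i)"
      unfolding act_def by (rule lin_sum[OF ES_lin Ks_finite memT])
    then show ?thesis by (simp add: act_def sum_distrib_left)
  qed
  finally show "act (p + p') q (kmult x y) f i = act p (p' + q) x (act p' q y f) i" .
qed

end


theorem proposition5p1:
  fixes I :: "'a::comm_ring_1 set"
    and B :: "nat \<Rightarrow> 'i set" and i0 :: 'i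
    and d :: "nat \<Rightarrow> ('i \<Rightarrow> 'a) \<Rightarrow> ('i \<Rightarrow> 'a)"
    and prod :: "nat \<Rightarrow> ('i \<Rightarrow> 'a) \<Rightarrow> ('i \<Rightarrow> 'a) \<Rightarrow> ('i \<Rightarrow> 'a)"
    and a :: "nat \<Rightarrow> 'a" and n :: nat
  assumes noeth: "noetherian_ring TYPE('a)"
    and ideal: "is_ideal I"
    and res: "free_resolution I B i0 d"
    and prod_bilin: "\<forall>i. bilin_on (free_mod (B 1)) (free_mod (B i)) (prod i)"
    and prod_deg: "\<forall>i. \<forall>f1\<in>free_mod (B 1). \<forall>f\<in>free_mod (B i). prod i f1 f \<in> free_mod (B (Suc i))"
    and prod_a0: "\<forall>f1\<in>free_mod (B 1). \<forall>f\<in>free_mod (B 0).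
                    d 1 (prod 0 f1 f) = vscale (d 1 f1 i0) f"
    and prod_a: "\<forall>i. \<forall>f1\<in>free_mod (B 1). \<forall>f\<in>free_mod (B (Suc i)).
                    d (Suc (Suc i)) (prod (Suc i) f1 f) =
                      vadd (vscale (d 1 f1 i0) f) (vscale (-1) (prod i f1 (d (Suc i) f)))"
    and prod_b: "\<forall>i. \<forall>f1\<in>free_mod (B 1). \<forall>f\<in>free_mod (B i).
                    prod (Suc i) f1 (prod i f1 f) = vzero"
    and regseq: "regular_sequence a n"
    and sub: "ideal_gen a n \<subseteq> I"
  shows "\<exists>act. dg_koszul_module a n B d act"
proof -
  note R = res[unfolded free_resolution_def]
  have B0: "B 0 = {i0}" using conjunct1[OF R] .
  have dlin: "\<forall>i. lin_on (free_mod (B i)) (d i)" using conjunct1[OF conjunct2[OF R]] .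
  have dz: "\<forall>f\<in>free_mod (B 0). d 0 f = vzero" using conjunct1[OF conjunct2[OF conjunct2[OF R]]] .
  have ddeg: "\<forall>i. \<forall>f\<in>free_mod (B (Suc i)). d (Suc i) f \<in> free_mod (B i)"
    using conjunct1[OF conjunct2[OF conjunct2[OF conjunct2[OF R]]]] .
  have im1: "d 1 ` free_mod (B 1) = {f \<in> free_mod (B 0). f i0 \<in> I}"
    using conjunct2[OF conjunct2[OF conjunct2[OF conjunct2[OF conjunct2[OF conjunct2[OF R]]]]]] .
  have ex: "\<exists>g. g \<in> free_mod (B 1) \<and> d 1 g i0 = a j" if j: "j < n" for j
  proof -
    define r where "r = (\<lambda>k. if k = j then (1::'a) else 0)"
    have rf: "(\<lambda>k. r k * a k) = (\<lambda>k. if k = j then a j else 0)" by (auto simp: r_def fun_eq_iff)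
    have rs: "(\<Sum>k<n. r k * a k) = a j" unfolding rf using j by simp
    have "a j \<in> ideal_gen a n" unfolding ideal_gen_def mem_Collect_eq
      by (rule exI[of _ r]) (simp add: rs)
    then have aI: "a j \<in> I" using sub by blast
    define e where "e = (\<lambda>x. if x = i0 then a j else 0)"
    have "{x. e x \<noteq> 0} \<subseteq> {i0}" by (auto simp: e_def)
    then have "finite {x. e x \<noteq> 0}" using finite_subset by blast
    then have "e \<in> free_mod (B 0)" using B0 by (simp add: free_mod_def e_def)
    then have "e \<in> d 1 ` free_mod (B 1)" using im1 aI by (simp add: e_def)
    then obtain g where "g \<in> free_mod (B 1)" "d 1 g = e" by blast
    then show ?thesis by (auto simp: e_def)
  qed
  define fe where "fe = (\<lambda>j. if j < n then (SOME g. g \<in> free_mod (B 1) \<and> d 1 g i0 = a j) else vzero)"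
  have fe1: "fe j \<in> free_mod (B 1)" for j
  proof (cases "j < n")
    case True
    then show ?thesis using someI_ex[OF ex[OF True]] by (simp add: fe_def)
  next
    case False
    then show ?thesis using fm_zero by (simp add: fe_def)
  qed
  have fe2: "d 1 (fe j) i0 = a j" if "j < n" for j
    using someI_ex[OF ex[OF that]] that by (simp add: fe_def)
  interpret K: kz B i0 d prod a n fe
  proof
    show "\<And>i. lin_on (free_mod (B i)) (d i)" using dlin by blast
    show "\<And>f. f \<in> free_mod (B 0) \<Longrightarrow> d 0 f = vzero" using dz by blast
    show "\<And>i f. f \<in> free_mod (B (Suc i)) \<Longrightarrow> d (Suc i) f \<in> free_mod (B i)" using ddeg by blast
    show "\<And>i u. u \<in> free_mod (B 1) \<Longrightarrow> lin_on (free_mod (B i)) (prod i u)"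
      using prod_bilin unfolding bilin_on_def by blast
    show "\<And>i v. v \<in> free_mod (B i) \<Longrightarrow> lin_on (free_mod (B 1)) (\<lambda>u. prod i u v)"
      using prod_bilin unfolding bilin_on_def by blast
    show "\<And>i f1 f. f1 \<in> free_mod (B 1) \<Longrightarrow> f \<in> free_mod (B i) \<Longrightarrow> prod i f1 f \<in> free_mod (B (Suc i))"
      using prod_deg by blast
    show "\<And>f1 f. f1 \<in> free_mod (B 1) \<Longrightarrow> f \<in> free_mod (B 0) \<Longrightarrow>
                    d 1 (prod 0 f1 f) = vscale (d 1 f1 i0) f" using prod_a0 by blast
    show "\<And>i f1 f. f1 \<in> free_mod (B 1) \<Longrightarrow> f \<in> free_mod (B (Suc i)) \<Longrightarrow>
                    d (Suc (Suc i)) (prod (Suc i) f1 f) =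
                      vadd (vscale (d 1 f1 i0) f) (vscale (-1) (prod i f1 (d (Suc i) f)))"
      using prod_a by blast
    show "\<And>i f1 f. f1 \<in> free_mod (B 1) \<Longrightarrow> f \<in> free_mod (B i) \<Longrightarrow>
                    prod (Suc i) f1 (prod i f1 f) = vzero" using prod_b by blast
    show "\<And>j. fe j \<in> free_mod (B 1)" by (rule fe1)
    show "\<And>j. j < n \<Longrightarrow> d 1 (fe j) i0 = a j" by (rule fe2)
  qed
  have "dg_koszul_module a n B d K.act"
    unfolding dg_koszul_module_def bilin_on_def
    apply (intro conjI allI ballI)
         apply (rule K.act_lin_f)
        apply (rule K.act_lin_x)
       apply (rule K.act_mem, assumption)
      apply (rule K.act_unit)
     apply (rule K.act_assoc; assumption)
    apply (rule K.act_leibniz; assumption)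
    done
  then show ?thesis by blast
qed


end
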